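(* Let $A$ be a finite alphabet with $|A|=k$, and let $L\subseteq A^*$ be $n$-PT. Let $m=f_k(n)$. Then ${\uparrow}L$ is $m$-PT, while ${\uparrow}_<L$ and $\min(L)$ are $(m+1)$-PT.
   Context: For words $u,v$, $u\sqsubseteq v$ (subword) means $u=a_1\cdots a_\ell$ with letters $a_i$ and $v=v_0a_1v_1\cdots a_\ell v_\ell$ for some words $v_i$; $u\sqsubset v$ means $u\sqsubseteq v$ and $u\ne v$. ${\uparrow}L=\{v\in A^*~|~\exists u\in L: u\sqsubseteq v\}$, ${\uparrow}_<L=\{v~|~\exists u\in L: u\sqsubset v\}$, and $\min(L)=\{u\in L~|~\forall v\in L: v\not\sqsubset u\}$. For $n\in\mathbb{N}$, $u\sim_n v$ iff $u$ and $v$ have exactly the same subwords of length at most $n$; $L$ is $n$-PT if it is a union of $\sim_n$-classes. The functions $f_k$ ($k\geq1$) are defined by $f_1(n)=n$ and $f_{k+1}(n)=\max_{0\leq m\leq n}\bigl(m f_k(n+1-m)+m+f_k(n-m)\bigr)$. *)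

theory Defs
  imports "HOL-Library.Sublist"
begin

definition subwords_upto :: "nat \<Rightarrow> 'a list \<Rightarrow> 'a list set" where
  "subwords_upto n u = {w. subseq w u \<and> length w \<le> n}"

definition simon_equiv :: "nat \<Rightarrow> 'a list \<Rightarrow> 'a list \<Rightarrow> bool" where
  "simon_equiv n u v \<longleftrightarrow> subwords_upto n u = subwords_upto n v"

definition is_PT :: "'a set \<Rightarrow> nat \<Rightarrow> 'a list set \<Rightarrow> bool" where
  "is_PT A n L \<longleftrightarrow> L \<subseteq> lists A \<and>
     (\<forall>u\<in>lists A. \<forall>v\<in>lists A. simon_equiv n u v \<longrightarrow> (u \<in> L \<longleftrightarrow> v \<in> L))"

definition up_closure :: "'a set \<Rightarrow> 'a list set \<Rightarrow> 'a list set" where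
  "up_closure A L = {v \<in> lists A. \<exists>u\<in>L. subseq u v}"

definition strict_up_closure :: "'a set \<Rightarrow> 'a list set \<Rightarrow> 'a list set" where
  "strict_up_closure A L = {v \<in> lists A. \<exists>u\<in>L. strict_subseq u v}"

definition min_words :: "'a list set \<Rightarrow> 'a list set" where
  "min_words L = {u \<in> L. \<forall>v\<in>L. \<not> strict_subseq v u}"

text \<open>f k n as in the paper for k \<ge> 1 (value at k = 0 is an irrelevant convention).\<close>
fun fk :: "nat \<Rightarrow> nat \<Rightarrow> nat" where
  "fk 0 n = n"
| "fk (Suc 0) n = n"
| "fk (Suc (Suc k)) n =
     Max ((\<lambda>m. m * fk (Suc k) (n + 1 - m) + m + fk (Suc k) (n - m)) ` {0..n})"

end

theory Submission imports Defs begin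

lemma subseq_rev: "subseq xs ys \<Longrightarrow> subseq (rev xs) (rev ys)"
  by (induct rule: list_emb.induct) (auto intro: subseq_rev_drop_many)

lemma subseq_rev_iff: "subseq (rev xs) (rev ys) \<longleftrightarrow> subseq xs ys"
  using subseq_rev[of "rev xs" "rev ys"] subseq_rev[of xs ys] by auto

lemma simon_equiv_iff:
  "simon_equiv n u v \<longleftrightarrow> (\<forall>w. length w \<le> n \<longrightarrow> (subseq w u \<longleftrightarrow> subseq w v))"
  unfolding simon_equiv_def subwords_upto_def by blast

lemma simon_equiv_mono: "simon_equiv n u v \<Longrightarrow> n' \<le> n \<Longrightarrow> simon_equiv n' u v"
  by (auto simp: simon_equiv_iff)

lemma simon_equiv_rev: "simon_equiv n (rev u) (rev v) \<longleftrightarrow> simon_equiv n u v"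
  unfolding simon_equiv_iff
  by (metis length_rev rev_rev_ident subseq_rev_iff)

definition rich :: "'a set \<Rightarrow> nat \<Rightarrow> 'a list \<Rightarrow> bool" where
  "rich B r z \<longleftrightarrow> (\<forall>x\<in>lists B. length x \<le> r \<longrightarrow> subseq x z)"

lemma rich_mono: "rich B r z \<Longrightarrow> r' \<le> r \<Longrightarrow> rich B r' z"
  by (auto simp: rich_def)

lemma rich_super: "rich B r z \<Longrightarrow> subseq z z' \<Longrightarrow> rich B r z'"
  by (auto simp: rich_def intro: subseq_order.order_trans)

lemma rich_append: "rich B r1 z1 \<Longrightarrow> rich B r2 z2 \<Longrightarrow> rich B (r1+r2) (z1@z2)"
  unfolding rich_def
proof (intro ballI impI)
  fix x assume h: "\<forall>x\<in>lists B. length x \<le> r1 \<longrightarrow> subseq x z1"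
     "\<forall>x\<in>lists B. length x \<le> r2 \<longrightarrow> subseq x z2" "x \<in> lists B" "length x \<le> r1 + r2"
  have t1: "take r1 x \<in> lists B" "drop r1 x \<in> lists B" using h(3)
    by (auto simp: in_lists_conv_set dest: in_set_takeD in_set_dropD)
  have "subseq (take r1 x) z1" using h(1) t1 h(4) by auto
  moreover have "subseq (drop r1 x) z2" using h(2) t1 h(4) by auto
  ultimately show "subseq x (z1 @ z2)"
    by (metis append_take_drop_id list_emb_append_mono)
qed

lemma rich_rev: "rich B r z \<Longrightarrow> rich B r (rev z)"
  unfolding rich_def by (metis length_rev rev_rev_ident subseq_rev_iff set_rev in_lists_conv_set)

lemma rich_one: "B \<subseteq> set z \<Longrightarrow> rich B 1 z"
  unfolding rich_def
proof (intro ballI impI)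
  fix x assume "B \<subseteq> set z" "x \<in> lists B" "length x \<le> 1"
  then show "subseq x z"
    by (cases x) (auto simp: subseq_singleton_left)
qed

lemma subseq_lists: "subseq w u \<Longrightarrow> u \<in> lists B \<Longrightarrow> w \<in> lists B"
  by (induct rule: list_emb.induct) auto

lemma rich_left:
  assumes eq: "simon_equiv p s t" and r: "rich B r z" and L: "z @ s \<in> lists B" "z @ t \<in> lists B"
  shows "simon_equiv (p + r) (z @ s) (z @ t)"
proof -
  have one: "subseq w (z @ t)" if h1: "simon_equiv p s t" and h2: "z @ s \<in> lists B"
    and h3: "subseq w (z @ s)" and h4: "length w \<le> p + r" for w s t
  proof (cases "length w \<le> r")
    case True
    have "w \<in> lists B" using h2 h3 subseq_lists by blast
    then show ?thesis using r True by (auto simp: rich_def intro: subseq_rev_drop_many)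
  next
    case False
    obtain w1 w2 where w: "w = w1 @ w2" "subseq w1 z" "subseq w2 s"
      using h3 by (auto elim: subseq_appendE)
    define S where "S = {j. j \<le> length w \<and> subseq (take j w) z}"
    have fin: "finite S" unfolding S_def by auto
    have "length w1 \<in> S" using w unfolding S_def by auto
    define j where "j = Max S"
    have jS: "j \<in> S" unfolding j_def using fin \<open>length w1 \<in> S\<close> Max_in by blast
    have "length w1 \<le> j" unfolding j_def using fin \<open>length w1 \<in> S\<close> by auto
    have "w \<in> lists B" using h2 h3 subseq_lists by blast
    then have "take r w \<in> lists B" by (auto simp: in_lists_conv_set dest: in_set_takeD)
    then have "subseq (take r w) z" using r by (auto simp: rich_def)
    then have "r \<in> S" using False unfolding S_def by auto
    then have "r \<le> j" unfolding j_def using fin by auto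
    have "drop j w = drop (j - length w1) w2" using w \<open>length w1 \<le> j\<close> by simp
    then have "subseq (drop j w) s" using w(3)
      by (metis append_take_drop_id subseq_drop_many subseq_order.order_trans
          suffix_drop suffix_imp_subseq)
    moreover have "length (drop j w) \<le> p" using \<open>r \<le> j\<close> h4 by simp
    ultimately have "subseq (drop j w) t" using h1 by (auto simp: simon_equiv_iff)
    moreover have "subseq (take j w) z" using jS S_def by auto
    ultimately show ?thesis by (metis append_take_drop_id list_emb_append_mono)
  qed
  have eq': "simon_equiv p t s" using eq by (auto simp: simon_equiv_iff)
  show ?thesis unfolding simon_equiv_iff
    using one[OF eq L(1)] one[OF eq' L(2)] by blast
qed

lemma rich_right:
  assumes eq: "simon_equiv p s t" and r: "rich B r z" and L: "s @ z \<in> lists B" "t @ z \<in> lists B"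
  shows "simon_equiv (p + r) (s @ z) (t @ z)"
proof -
  have "simon_equiv (p + r) (rev z @ rev s) (rev z @ rev t)"
    apply (rule rich_left[OF _ rich_rev[OF r]])
    using eq L by (auto simp: simon_equiv_rev)
  then show ?thesis by (metis rev_append simon_equiv_rev)
qed

definition Gr :: "nat \<Rightarrow> 'a list \<Rightarrow> bool" where
  "Gr N u \<longleftrightarrow> (\<exists>x a y p q. u = x @ a # y \<and> simon_equiv p (x @ [a]) x \<and>
      simon_equiv q (a # y) y \<and> N \<le> p + q)"

lemma Gr_mono: "Gr N u \<Longrightarrow> N' \<le> N \<Longrightarrow> Gr N' u"
  unfolding Gr_def by (blast intro: le_trans)

lemma Gr_left: "Gr N u \<Longrightarrow> rich B r z \<Longrightarrow> z @ u \<in> lists B \<Longrightarrow> Gr (N + r) (z @ u)"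
proof -
  assume "Gr N u" "rich B r z" "z @ u \<in> lists B"
  then obtain x a y p q where h: "u = x @ a # y" "simon_equiv p (x @ [a]) x"
      "simon_equiv q (a # y) y" "N \<le> p + q" unfolding Gr_def by blast
  have "simon_equiv (p + r) (z @ (x @ [a])) (z @ x)"
    by (rule rich_left[OF h(2) \<open>rich B r z\<close>]) (use \<open>z @ u \<in> lists B\<close> h(1) in auto)
  then show ?thesis unfolding Gr_def
    by (intro exI[of _ "z @ x"] exI[of _ a] exI[of _ y] exI[of _ "p + r"] exI[of _ q])
      (use h in auto)
qed

lemma Gr_right: "Gr N u \<Longrightarrow> rich B r z \<Longrightarrow> u @ z \<in> lists B \<Longrightarrow> Gr (N + r) (u @ z)"
proof -
  assume "Gr N u" "rich B r z" "u @ z \<in> lists B"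
  then obtain x a y p q where h: "u = x @ a # y" "simon_equiv p (x @ [a]) x"
      "simon_equiv q (a # y) y" "N \<le> p + q" unfolding Gr_def by blast
  have "simon_equiv (q + r) ((a # y) @ z) (y @ z)"
    by (rule rich_right[OF h(3) \<open>rich B r z\<close>]) (use \<open>u @ z \<in> lists B\<close> h(1) in auto)
  then show ?thesis unfolding Gr_def
    by (intro exI[of _ x] exI[of _ a] exI[of _ "y @ z"] exI[of _ p] exI[of _ "q + r"])
      (use h in auto)
qed

lemma Gr_simon: assumes "Gr n u" shows "\<exists>x a y. u = x @ a # y \<and> simon_equiv n (x @ y) u"
proof -
  obtain x a y p q where h: "u = x @ a # y" "simon_equiv p (x @ [a]) x"
      "simon_equiv q (a # y) y" "n \<le> p + q" using assms unfolding Gr_def by blast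
  have A: "subseq w (x @ y)" if sw: "subseq w (x @ a # y)" and lw: "length w \<le> n" for w
  proof -
    obtain w1 w2 where w: "w = w1 @ w2" "subseq w1 x" "subseq w2 (a # y)"
      using subseq_appendE[OF sw] by blast
    show ?thesis
    proof (cases "subseq w2 y")
      case True then show ?thesis using w by (simp add: list_emb_append_mono)
    next
      case False
      then obtain w2' where w2: "w2 = a # w2'" "subseq w2' y" using w(3)
        by (cases w2) (auto split: if_splits)
      show ?thesis
      proof (cases "length w1 < p")
        case True
        have "subseq (w1 @ [a]) (x @ [a])" using w(2) by simp
        moreover have "length (w1 @ [a]) \<le> p" using True by simp
        ultimately have "subseq (w1 @ [a]) x" using h(2) unfolding simon_equiv_iff by blast
        then show ?thesis using w w2 by (metis append.assoc append_Cons append_Nil list_emb_append_mono)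
      next
        case False
        then have "length (a # w2') \<le> q" using lw h(4) w w2 by simp
        moreover have "subseq (a # w2') (a # y)" using w2 by simp
        ultimately have "subseq (a # w2') y" using h(3) unfolding simon_equiv_iff by blast
        then show ?thesis using w w2 by (simp add: list_emb_append_mono)
      qed
    qed
  qed
  have B: "subseq w (x @ a # y)" if "subseq w (x @ y)" for w
    using that by (metis list_emb_append_mono subseq_Cons' subseq_order.dual_order.trans
        subseq_order.order_refl subseq_Cons2_iff append_Cons list_emb_Cons)
  have "simon_equiv n (x @ y) u" unfolding simon_equiv_iff
  proof (intro allI impI)
    fix w :: "'a list" assume "length w \<le> n"
    then show "subseq w (x @ y) = subseq w u" using A[of w] B[of w] h(1) by auto
  qed
  then show ?thesis using h(1) by (intro exI[of _ x] exI[of _ a] exI[of _ y] conjI) auto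
qed

inductive D :: "'a set \<Rightarrow> nat \<Rightarrow> 'a list \<Rightarrow> bool" for B where
  D0: "v \<in> lists B \<Longrightarrow> b \<in> B \<Longrightarrow> b \<notin> set v \<Longrightarrow> D B 0 v"
| DS: "c \<in> B \<Longrightarrow> c \<notin> set u1 \<Longrightarrow> u1 \<in> lists B \<Longrightarrow> B \<subseteq> insert c (set u1) \<Longrightarrow>
       D B m w \<Longrightarrow> D B (Suc m) (u1 @ c # w)"

lemma D_lists: "D B m w \<Longrightarrow> w \<in> lists B"
  by (induct rule: D.induct) auto

lemma D_rich: "D B m w \<Longrightarrow> rich B m w"
proof (induct rule: D.induct)
  case (D0 v b) then show ?case by (auto simp: rich_def)
next
  case (DS c u1 m w)
  have "rich B 1 (u1 @ [c])" using DS by (intro rich_one) auto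
  from rich_append[OF this DS(6)] show ?case by simp
qed

lemma D_exists:
  assumes "finite B" "B \<noteq> {}"
  shows "u \<in> lists B \<Longrightarrow> \<exists>m. D B m u"
proof (induct "length u" arbitrary: u rule: less_induct)
  case less
  show ?case
  proof (cases "B \<subseteq> set u")
    case False
    then obtain b where b: "b \<in> B" "b \<notin> set u" by auto
    have "D B 0 u" by (rule D0[OF less.prems b])
    then show ?thesis by (rule exI)
  next
    case True
    define P where "P = (\<lambda>i. B \<subseteq> set (take i u))"
    have Pu: "P (length u)" using True P_def by simp
    define i where "i = (LEAST i. P i)"
    have Pi: "P i" unfolding i_def by (rule LeastI[of P, OF Pu])
    have ile: "i \<le> length u" unfolding i_def by (rule Least_le[of P, OF Pu])
    have i0: "i \<noteq> 0" using Pi assms(2) P_def by auto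
    have nP: "\<not> P (i - 1)" using i0 unfolding i_def
      by (metis diff_less gr_zeroI less_one not_less_Least)
    define u1 where "u1 = take (i - 1) u"
    define c where "c = u ! (i - 1)"
    define w where "w = drop i u"
    have tk: "take i u = u1 @ [c]" unfolding u1_def c_def
      using i0 ile by (metis One_nat_def Suc_pred diff_less less_le_trans less_one not_gr_zero take_Suc_conv_app_nth)
    have ueq: "u = u1 @ c # w"
      using tk unfolding w_def by (metis append.assoc append_Cons append_Nil append_take_drop_id)
    have f1: "c \<notin> set u1"
    proof
      assume "c \<in> set u1"
      then have "set (take i u) = set u1" using tk by auto
      then show False using nP Pi P_def u1_def by simp
    qed
    have f2: "B \<subseteq> insert c (set u1)" using Pi P_def tk by simp
    have f3: "c \<in> B" "u1 \<in> lists B" "w \<in> lists B" using less.prems ueq by auto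
    have "length w < length u" using ueq by simp
    then obtain m where f4: "D B m w" using less.hyps \<open>w \<in> lists B\<close> by blast
    have "D B (Suc m) (u1 @ c # w)" by (rule D.DS[OF f3(1) f1 f3(2) f2 f4])
    then show ?thesis using ueq by auto
  qed
qed

fun g :: "nat \<Rightarrow> nat \<Rightarrow> nat" where
  "g 0 n = 0"
| "g (Suc k) n = Max ((\<lambda>m. m * g k (n + 1 - m) + m + g k (n - m)) ` {0..n})"

lemma g_ge: "m \<le> n \<Longrightarrow> m * g k (n + 1 - m) + m + g k (n - m) \<le> g (Suc k) n"
  by (auto intro: Max_ge)

lemma g_fk: "k \<ge> 1 \<Longrightarrow> g k n = fk k n"
proof (induct k arbitrary: n)
  case 0 then show ?case by simp
next
  case (Suc k)
  show ?case
  proof (cases k)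
    case 0
    have "g (Suc 0) n = Max ((\<lambda>m. m) ` {0..n})" by simp
    also have "\<dots> = n" by (rule Max_eqI) auto
    finally show ?thesis using 0 by simp
  next
    case (Suc k')
    have IH: "\<And>m. g k m = fk k m" using Suc.hyps Suc by simp
    have "g (Suc k) n = Max ((\<lambda>m. m * g k (n + 1 - m) + m + g k (n - m)) ` {0..n})"
      by (rule g.simps(2))
    also have "\<dots> = Max ((\<lambda>m. m * fk k (n + 1 - m) + m + fk k (n - m)) ` {0..n})"
      by (simp only: IH)
    also have "\<dots> = fk (Suc k) n" using \<open>k = Suc k'\<close> by (simp only: fk.simps(3))
    finally show ?thesis .
  qed
qed

lemma step_D:
  fixes B :: "'a set"
  assumes IH: "\<And>(B' :: 'a set) u N. finite B' \<Longrightarrow> card B' \<le> k \<Longrightarrow> u \<in> lists B' \<Longrightarrow> g k N < length u \<Longrightarrow> Gr N u"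
    and fin: "finite B" and cB: "card B \<le> Suc k"
  shows "D B m u \<Longrightarrow> 1 \<le> M \<Longrightarrow> m * g k M + m + g k (M - 1) < length u \<Longrightarrow> Gr (M - 1 + m) u"
proof (induct rule: D.induct)
  case (D0 v b)
  have "v \<in> lists (B - {b})" using D0 by auto
  moreover have "card (B - {b}) \<le> k" using cB D0 fin by (simp add: card_Diff_singleton)
  ultimately show ?case using IH[of "B - {b}" v "M - 1"] fin D0 by simp
next
  case (DS c u1 m w)
  show ?case
  proof (cases "g k M < length u1")
    case True
    have "u1 \<in> lists (B - {c})" using DS by auto
    moreover have "card (B - {c}) \<le> k" using cB DS fin by (simp add: card_Diff_singleton)
    ultimately have G: "Gr M u1" using IH[of "B - {c}" u1 M] fin True by simp
    have "rich B m w" using D_rich[OF DS(5)] .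
    then have R: "rich B m (c # w)" by (rule rich_super) auto
    have "u1 @ (c # w) \<in> lists B" using DS D_lists[OF DS(5)] by auto
    from Gr_right[OF G R this] have "Gr (M + m) (u1 @ c # w)" by simp
    then show ?thesis using DS(7) by simp
  next
    case False
    have "m * g k M + m + g k (M - 1) < length w" using False DS(8) by simp
    then have G: "Gr (M - 1 + m) w" using DS by simp
    have R: "rich B 1 (u1 @ [c])" using DS by (intro rich_one) auto
    have "(u1 @ [c]) @ w \<in> lists B" using DS D_lists[OF DS(5)] by auto
    from Gr_left[OF G R this] show ?thesis by simp
  qed
qed

lemma big: "D B m u \<Longrightarrow> N < m \<Longrightarrow> Gr N u"
proof (induct rule: D.induct)
  case (D0 v b) then show ?case by simp
next
  case (DS c u1 m w)
  have "rich B N w" using D_rich[OF DS(5)] DS(7) by (auto intro: rich_mono)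
  moreover have "simon_equiv 0 [c] []" by (auto simp: simon_equiv_iff)
  moreover have "[c] @ w \<in> lists B" "[] @ w \<in> lists B" using DS(1) D_lists[OF DS(5)] by auto
  ultimately have "simon_equiv (0 + N) ([c] @ w) ([] @ w)" by (intro rich_right) auto
  moreover have "simon_equiv 0 (u1 @ [c]) u1" by (auto simp: simon_equiv_iff)
  ultimately show ?case unfolding Gr_def
    by (intro exI[of _ u1] exI[of _ c] exI[of _ w] exI[of _ 0] exI[of _ N]) auto
qed

lemma Q: "finite B \<Longrightarrow> card B \<le> k \<Longrightarrow> u \<in> lists B \<Longrightarrow> g k N < length u \<Longrightarrow> Gr N u"
proof (induct k arbitrary: B u N)
  case 0
  then have "B = {}" by simp
  then show ?case using 0 by simp
next
  case (Suc k)
  show ?case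
  proof (cases "B = {}")
    case True then show ?thesis using Suc by simp
  next
    case False
    obtain m where Dm: "D B m u" using D_exists[OF Suc(2) False Suc(4)] by blast
    show ?thesis
    proof (cases "N < m")
      case True then show ?thesis using big[OF Dm] by simp
    next
      case False
      have mN: "m \<le> N" using False by simp
      have "m * g k (N + 1 - m) + m + g k (N - m) \<le> g (Suc k) N" using False by (intro g_ge) simp
      from le_less_trans[OF this Suc(5)]
      have bnd: "m * g k (N + 1 - m) + m + g k (N + 1 - m - 1) < length u" by simp
      have M1: "1 \<le> N + 1 - m" using mN by simp
      have "Gr (N + 1 - m - 1 + m) u"
        by (rule step_D[where k=k and B=B and M="N + 1 - m", OF Suc.hyps Suc.prems(1,2) Dm M1 bnd])
      then show ?thesis using mN by simp
    qed
  qed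
qed

lemma strict_subseq_length: "strict_subseq v w \<Longrightarrow> length v < length w"
  unfolding strict_subseq_def
  by (metis le_neq_implies_less list_emb_length subseq_same_length)

lemma min_exists: "w \<in> L \<Longrightarrow> \<exists>w0\<in>min_words L. subseq w0 w"
proof (induct "length w" arbitrary: w rule: less_induct)
  case less
  show ?case
  proof (cases "w \<in> min_words L")
    case True then show ?thesis by auto
  next
    case False
    then obtain v where "v \<in> L" "strict_subseq v w" using less.prems unfolding min_words_def by auto
    moreover have "length v < length w" using \<open>strict_subseq v w\<close> by (rule strict_subseq_length)
    ultimately obtain w0 where "w0 \<in> min_words L" "subseq w0 v" using less by blast
    then show ?thesis using \<open>strict_subseq v w\<close> unfolding strict_subseq_def
      by (meson subseq_order.order_trans)
  qed
qed

lemma strict_ext_aux: "subseq w0 u \<Longrightarrow> w0 \<noteq> u \<Longrightarrow>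
   \<exists>w'. subseq w0 w' \<and> subseq w' u \<and> length w' = Suc (length w0)"
proof (induct rule: list_emb.induct)
  case (list_emb_Nil ys)
  then obtain y ys' where "ys = y # ys'" by (cases ys) auto
  then show ?case by (intro exI[of _ "[y]"]) auto
next
  case (list_emb_Cons xs ys y)
  show ?case
  proof (cases "xs = ys")
    case True then show ?thesis by (intro exI[of _ "y # ys"]) auto
  next
    case False
    then obtain w' where "subseq xs w'" "subseq w' ys" "length w' = Suc (length xs)"
      using list_emb_Cons by blast
    then show ?thesis by (intro exI[of _ w']) auto
  qed
next
  case (list_emb_Cons2 x y xs ys)
  then have "xs \<noteq> ys" by auto
  then obtain w' where "subseq xs w'" "subseq w' ys" "length w' = Suc (length xs)"
    using list_emb_Cons2 by blast
  then show ?case using list_emb_Cons2 by (intro exI[of _ "x # w'"]) auto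
qed

lemma minlen:
  assumes "finite A" "card A = k" "k \<ge> 1" "is_PT A n L" "u \<in> min_words L"
  shows "length u \<le> fk k n"
proof (rule ccontr)
  assume "\<not> length u \<le> fk k n"
  then have "g k n < length u" using g_fk[OF assms(3)] by simp
  moreover have uL: "u \<in> L" "u \<in> lists A" using assms(4,5) unfolding min_words_def is_PT_def by auto
  ultimately have "Gr n u" using Q[of A k u n] assms(1,2) by simp
  then obtain x a y where h: "u = x @ a # y" "simon_equiv n (x @ y) u" using Gr_simon by blast
  have "x @ y \<in> lists A" using uL h by auto
  then have "x @ y \<in> L" using assms(4) uL h unfolding is_PT_def by blast
  moreover have "strict_subseq (x @ y) u" unfolding strict_subseq_def using h
    by (auto intro!: list_emb_append_mono)
  ultimately show False using assms(5) unfolding min_words_def by blast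
qed

theorem theorem11:
  fixes A :: "'a set" and L :: "'a list set" and k n m :: nat
  assumes "finite A" and "card A = k" and "k \<ge> 1"
    and "is_PT A n L"
    and "m = fk k n"
  shows "is_PT A m (up_closure A L) \<and>
         is_PT A (m + 1) (strict_up_closure A L) \<and>
         is_PT A (m + 1) (min_words L)"
proof -
  have ml: "\<And>u. u \<in> min_words L \<Longrightarrow> length u \<le> m" using minlen assms by blast
  have LA: "L \<subseteq> lists A" using assms(4) unfolding is_PT_def by auto
  have nm: "n \<le> m + 1"
  proof -
    have "n * g (k - 1) (n + 1 - n) + n + g (k - 1) (n - n) \<le> g (Suc (k - 1)) n" by (rule g_ge) simp
    then have "n \<le> g k n" using assms(3) by simp
    then show ?thesis using g_fk[OF assms(3)] assms(5) by simp
  qed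
  have up: "v \<in> up_closure A L" if t1: "u \<in> up_closure A L" and t2: "simon_equiv m u v" and t3: "v \<in> lists A" for u v
  proof -
    obtain w where "w \<in> L" "subseq w u" using t1 unfolding up_closure_def by auto
    then obtain w0 where "w0 \<in> min_words L" "subseq w0 u"
      using min_exists by (meson subseq_order.order_trans)
    moreover then have "subseq w0 v" using t2 ml unfolding simon_equiv_iff by blast
    ultimately show ?thesis using t3 unfolding up_closure_def min_words_def by auto
  qed
  have sup: "v \<in> strict_up_closure A L" if t1: "u \<in> strict_up_closure A L" and t2: "simon_equiv (m+1) u v"
    and t3: "v \<in> lists A" for u v
  proof -
    obtain w where "w \<in> L" "strict_subseq w u" using t1 unfolding strict_up_closure_def by auto
    then obtain w0 where w0: "w0 \<in> min_words L" "subseq w0 w"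
      using min_exists by blast
    then have "strict_subseq w0 u" using \<open>strict_subseq w u\<close>
      using subseq_order.le_less_trans by blast
    then obtain w' where w': "subseq w0 w'" "subseq w' u" "length w' = Suc (length w0)"
      using strict_ext_aux unfolding strict_subseq_def by blast
    have len: "length w' \<le> m + 1" using ml[OF w0(1)] w'(3) by simp
    have "\<forall>w. length w \<le> m + 1 \<longrightarrow> (subseq w u \<longleftrightarrow> subseq w v)"
      using t2 by (simp add: simon_equiv_iff)
    then have sv: "subseq w' v" using len w'(2) by blast
    moreover have "length w0 < length v" using list_emb_length[OF sv] w'(3) by simp
    ultimately have "strict_subseq w0 v" using w'(1) unfolding strict_subseq_def
      using subseq_order.order_trans by blast
    then show ?thesis using t3 w0 unfolding strict_up_closure_def min_words_def by auto
  qed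
  have symm: "simon_equiv N v u" if "simon_equiv N u v" for N u v
    using that unfolding simon_equiv_def by simp
  have P1: "is_PT A m (up_closure A L)"
    unfolding is_PT_def
  proof (intro conjI ballI impI)
    show "up_closure A L \<subseteq> lists A" by (auto simp: up_closure_def)
    fix u v assume h: "u \<in> lists A" "v \<in> lists A" "simon_equiv m u v"
    show "u \<in> up_closure A L \<longleftrightarrow> v \<in> up_closure A L"
      using up[OF _ h(3) h(2)] up[OF _ symm[OF h(3)] h(1)] by blast
  qed
  have P2: "is_PT A (m + 1) (strict_up_closure A L)"
    unfolding is_PT_def
  proof (intro conjI ballI impI)
    show "strict_up_closure A L \<subseteq> lists A" by (auto simp: strict_up_closure_def)
    fix u v assume h: "u \<in> lists A" "v \<in> lists A" "simon_equiv (m + 1) u v"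
    show "u \<in> strict_up_closure A L \<longleftrightarrow> v \<in> strict_up_closure A L"
      using sup[OF _ h(3) h(2)] sup[OF _ symm[OF h(3)] h(1)] by blast
  qed
  have mw: "u \<in> min_words L \<longleftrightarrow> u \<in> L \<and> u \<notin> strict_up_closure A L" if "u \<in> lists A" for u
    using that unfolding min_words_def strict_up_closure_def by auto
  have P3: "is_PT A (m + 1) (min_words L)"
    unfolding is_PT_def
  proof (intro conjI ballI impI)
    show "min_words L \<subseteq> lists A" using LA unfolding min_words_def by auto
    fix u v assume h: "u \<in> lists A" "v \<in> lists A" "simon_equiv (m + 1) u v"
    have "simon_equiv n u v" using simon_equiv_mono[OF h(3) nm] .
    then have "u \<in> L \<longleftrightarrow> v \<in> L" using assms(4) h unfolding is_PT_def by blast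
    moreover have "u \<in> strict_up_closure A L \<longleftrightarrow> v \<in> strict_up_closure A L"
      using sup[OF _ h(3) h(2)] sup[OF _ symm[OF h(3)] h(1)] by blast
    ultimately show "u \<in> min_words L \<longleftrightarrow> v \<in> min_words L" using mw h by blast
  qed
  show ?thesis using P1 P2 P3 by blast
qed

end
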